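(* Let Assumptions 1 and 2 (stated in the context) hold. Then there exists a finite constant $\bar C$, depending only on $\zeta=(c_f,c_W,C_F,C_T,w_1,w_2,x_1,x_2,\tilde x_1,\tilde x_2)$, such that $$\|h\|_{2,t}\le \bar C\,\|Th\|_2\qquad\text{for every } h\in\mathcal M.$$
   Context: Let $(X,W)$ be a random pair with values in $[0,1]^2$; $F_{X|W}(x|w)$, $f_{X|W}(x|w)$, $f_{X,W}$, $f_W$ denote the conditional distribution function of $X$ given $W=w$, the conditional density, the joint density and the marginal density of $W$. Fix constants $0\le x_1<\tilde x_1<\tilde x_2<x_2\le1$ and $0<w_1<w_2<1$. "Increasing" means non-decreasing and "decreasing" means non-increasing. Assumption 1 (Monotone IV): (a) for all $x,w',w''\in(0,1)$ with $w'\le w''$, $F_{X|W}(x|w')\ge F_{X|W}(x|w'')$; (b) there is a constant $C_F>1$ such that $F_{X|W}(x|w_1)\ge C_F F_{X|W}(x|w_2)$ for all $x\in(0,x_2)$, and $C_F(1-F_{X|W}(x|w_1))\le 1-F_{X|W}(x|w_2)$ for all $x\in(x_1,1)$. Assumption 2 (Density): (i) $(X,W)$ has a density $f_{X,W}$ with respect to Lebesgue measure on $[0,1]^2$ with $\int_0^1\int_0^1 f_{X,W}(x,w)^2\,dx\,dw\le C_T$ for a finite constant $C_T$; (ii) there is $c_f>0$ with $f_{X|W}(x|w)\ge c_f$ for all $x\in[x_1,x_2]$ and $w\in\{w_1,w_2\}$; (iii) there are constants $0<c_W\le C_W<\infty$ with $c_W\le f_W(w)\le C_W$ for all $w\in[0,1]$.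 The operator $T:L^2[0,1]\to L^2[0,1]$ is $(Th)(w)=E[h(X)\mid W=w]f_W(w)=\int_0^1 h(x)f_{X,W}(x,w)\,dx$. The truncated norm is $\|h\|_{2,t}=\big(\int_{\tilde x_1}^{\tilde x_2}h(x)^2dx\big)^{1/2}$, and $\|\cdot\|_2$ is the usual norm of $L^2[0,1]$. $\mathcal M$ denotes the set of all monotone (increasing or decreasing) functions in $L^2[0,1]$. *)

theory Defs
  imports "HOL-Analysis.Analysis"
begin

text \<open>The joint density of (X,W) on the unit square is a function f with f x w = f_{X,W}(x,w).\<close>

definition fW :: "(real \<Rightarrow> real \<Rightarrow> real) \<Rightarrow> real \<Rightarrow> real" where
  "fW f w = (LINT x:{0..1}|lborel. f x w)"

definition condCDF :: "(real \<Rightarrow> real \<Rightarrow> real) \<Rightarrow> real \<Rightarrow> real \<Rightarrow> real" where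
  "condCDF f x w = (LINT t:{0..x}|lborel. f t w) / fW f w"

definition condDens :: "(real \<Rightarrow> real \<Rightarrow> real) \<Rightarrow> real \<Rightarrow> real \<Rightarrow> real" where
  "condDens f x w = f x w / fW f w"

definition opT :: "(real \<Rightarrow> real \<Rightarrow> real) \<Rightarrow> (real \<Rightarrow> real) \<Rightarrow> real \<Rightarrow> real" where
  "opT f h w = (LINT x:{0..1}|lborel. h x * f x w)"

definition norm2 :: "(real \<Rightarrow> real) \<Rightarrow> real" where
  "norm2 g = sqrt (LINT x:{0..1}|lborel. (g x)\<^sup>2)"

definition norm2t :: "real \<Rightarrow> real \<Rightarrow> (real \<Rightarrow> real) \<Rightarrow> real" where
  "norm2t a b h = sqrt (LINT x:{a..b}|lborel. (h x)\<^sup>2)"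

definition L2_01 :: "(real \<Rightarrow> real) set" where
  "L2_01 = {h. h \<in> borel_measurable lborel \<and> set_integrable lborel {0..1} (\<lambda>x. (h x)\<^sup>2)}"

definition monoL2 :: "(real \<Rightarrow> real) set" where
  "monoL2 = {h. h \<in> L2_01 \<and> (mono_on {0<..<1} h \<or> antimono_on {0<..<1} h)}"

definition monotone_IV :: "(real \<Rightarrow> real \<Rightarrow> real) \<Rightarrow> real \<Rightarrow> real \<Rightarrow> real \<Rightarrow> real \<Rightarrow> real \<Rightarrow> bool" where
  "monotone_IV f C_F x1 x2 w1 w2 \<longleftrightarrow>
     (\<forall>x w' w''. x \<in> {0<..<1} \<and> w' \<in> {0<..<1} \<and> w'' \<in> {0<..<1} \<and> w' \<le> w''
        \<longrightarrow> condCDF f x w' \<ge> condCDF f x w'') \<and>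
     1 < C_F \<and>
     (\<forall>x\<in>{0<..<x2}. condCDF f x w1 \<ge> C_F * condCDF f x w2) \<and>
     (\<forall>x\<in>{x1<..<1}. C_F * (1 - condCDF f x w1) \<le> 1 - condCDF f x w2)"

definition density_assm :: "(real \<Rightarrow> real \<Rightarrow> real) \<Rightarrow> real \<Rightarrow> real \<Rightarrow> real \<Rightarrow> real
     \<Rightarrow> real \<Rightarrow> real \<Rightarrow> real \<Rightarrow> real \<Rightarrow> bool" where
  "density_assm f C_T c_f c_W C_W x1 x2 w1 w2 \<longleftrightarrow>
     (\<lambda>(x, w). f x w) \<in> borel_measurable (lborel \<Otimes>\<^sub>M lborel) \<and>
     (\<forall>x\<in>{0..1}. \<forall>w\<in>{0..1}. 0 \<le> f x w) \<and>
     (\<integral>\<^sup>+ z \<in> {0..1} \<times> {0..1}. ennreal (case z of (x, w) \<Rightarrow> f x w) \<partial>(lborel \<Otimes>\<^sub>M lborel)) = 1 \<and>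
     (\<integral>\<^sup>+ z \<in> {0..1} \<times> {0..1}. ennreal ((case z of (x, w) \<Rightarrow> f x w)\<^sup>2) \<partial>(lborel \<Otimes>\<^sub>M lborel))
        \<le> ennreal C_T \<and>
     0 < c_f \<and>
     (\<forall>x\<in>{x1..x2}. \<forall>w\<in>{w1, w2}. condDens f x w \<ge> c_f) \<and>
     0 < c_W \<and> c_W \<le> C_W \<and>
     (\<forall>w\<in>{0..1}. c_W \<le> fW f w \<and> fW f w \<le> C_W)"

end

theory Submission
  imports Defs
begin

lemma layer_repr:
  fixes psi :: "real \<Rightarrow> real" and g :: "real \<Rightarrow> ennreal"
  assumes [measurable]: "psi \<in> borel_measurable lborel" "g \<in> borel_measurable lborel"
  shows "(\<integral>\<^sup>+x. ennreal (psi x) * g x \<partial>lborel) =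
         (\<integral>\<^sup>+s. indicator {0<..} s * (\<integral>\<^sup>+x. indicator {x. s < psi x} x * g x \<partial>lborel) \<partial>lborel)"
proof -
  have e: "ennreal (psi x) = (\<integral>\<^sup>+s. indicator {0<..<psi x} s \<partial>lborel)" for x
    by (cases "0 \<le> psi x") (auto simp: ennreal_neg)
  have "(\<integral>\<^sup>+x. ennreal (psi x) * g x \<partial>lborel) =
        (\<integral>\<^sup>+x. (\<integral>\<^sup>+s. indicator {0<..<psi x} s * g x \<partial>lborel) \<partial>lborel)"
    by (simp add: e nn_integral_multc)
  also have "\<dots> = (\<integral>\<^sup>+s. (\<integral>\<^sup>+x. indicator {0<..<psi x} s * g x \<partial>lborel) \<partial>lborel)"
  proof (rule lborel_pair.Fubini')
    have [measurable]: "(\<lambda>z. g (snd z)) \<in> borel_measurable (lborel \<Otimes>\<^sub>M lborel)"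
      by (rule measurable_compose[OF measurable_snd]) simp
    have "(\<lambda>(s, x). indicator {0<..<psi x} s * g x) = (\<lambda>z. (if 0 < fst z \<and> fst z < psi (snd z) then 1 else 0) * g (snd z))"
      by (auto simp: indicator_def fun_eq_iff)
    also have "\<dots> \<in> borel_measurable (lborel \<Otimes>\<^sub>M lborel)"
      by measurable
    finally show "(\<lambda>(s, x). indicator {0<..<psi x} s * g x) \<in> borel_measurable (lborel \<Otimes>\<^sub>M lborel)" .
  qed
  also have "\<dots> = (\<integral>\<^sup>+s. indicator {0<..} s * (\<integral>\<^sup>+x. indicator {x. s < psi x} x * g x \<partial>lborel) \<partial>lborel)"
  proof (rule nn_integral_cong)
    fix s :: real
    show "(\<integral>\<^sup>+x. indicator {0<..<psi x} s * g x \<partial>lborel) =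
      indicator {0<..} s * (\<integral>\<^sup>+x. indicator {x. s < psi x} x * g x \<partial>lborel)"
      by (cases "0 < s") (auto simp: indicator_def intro!: nn_integral_cong)
  qed
  finally show ?thesis .
qed

lemma layer:
  fixes psi :: "real \<Rightarrow> real" and g1 g2 :: "real \<Rightarrow> ennreal" and A B :: ennreal
  assumes [measurable]: "psi \<in> borel_measurable lborel" "g1 \<in> borel_measurable lborel" "g2 \<in> borel_measurable lborel"
    and le: "\<And>s. 0 < s \<Longrightarrow> A * (\<integral>\<^sup>+x. indicator {x. s < psi x} x * g1 x \<partial>lborel)
                     \<le> B * (\<integral>\<^sup>+x. indicator {x. s < psi x} x * g2 x \<partial>lborel)"
  shows "A * (\<integral>\<^sup>+x. ennreal (psi x) * g1 x \<partial>lborel) \<le> B * (\<integral>\<^sup>+x. ennreal (psi x) * g2 x \<partial>lborel)"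
proof -
  have "A * (\<integral>\<^sup>+x. ennreal (psi x) * g1 x \<partial>lborel) =
     (\<integral>\<^sup>+s. A * (indicator {0<..} s * (\<integral>\<^sup>+x. indicator {x. s < psi x} x * g1 x \<partial>lborel)) \<partial>lborel)"
    by (simp add: layer_repr nn_integral_cmult)
  also have "\<dots> \<le> (\<integral>\<^sup>+s. B * (indicator {0<..} s * (\<integral>\<^sup>+x. indicator {x. s < psi x} x * g2 x \<partial>lborel)) \<partial>lborel)"
  proof (rule nn_integral_mono)
    fix s :: real
    show "A * (indicator {0<..} s * (\<integral>\<^sup>+x. indicator {x. s < psi x} x * g1 x \<partial>lborel))
      \<le> B * (indicator {0<..} s * (\<integral>\<^sup>+x. indicator {x. s < psi x} x * g2 x \<partial>lborel))"
      using le[of s] by (cases "0 < s") auto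
  qed
  also have "\<dots> = B * (\<integral>\<^sup>+x. ennreal (psi x) * g2 x \<partial>lborel)"
    by (simp add: layer_repr nn_integral_cmult)
  finally show ?thesis .
qed



lemma upset_AE:
  fixes S :: "real set"
  assumes up: "\<And>x y. x \<in> S \<Longrightarrow> 0 < x \<Longrightarrow> x \<le> y \<Longrightarrow> y < 1 \<Longrightarrow> y \<in> S"
    and ne: "S \<inter> {0<..<1} \<noteq> {}"
  shows "AE x in lborel. (indicator (S \<inter> {0..1}) x :: ennreal) = indicator {Inf (S \<inter> {0<..<1})<..1} x"
proof -
  define V where "V = S \<inter> {0<..<1}"
  have bdd: "bdd_below V" unfolding V_def by (auto intro!: bdd_belowI[of _ 0])
  have V0: "0 \<le> Inf V" using ne unfolding V_def by (intro cInf_greatest) auto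
  have mem: "x \<in> S \<inter> {0..1} \<longleftrightarrow> x \<in> {Inf V<..1}" if "x \<noteq> 0" "x \<noteq> 1" "x \<noteq> Inf V" for x
  proof
    assume "x \<in> S \<inter> {0..1}"
    then have "x \<in> V" using that unfolding V_def by auto
    then have "Inf V \<le> x" using bdd by (intro cInf_lower)
    then show "x \<in> {Inf V<..1}" using that \<open>x \<in> S \<inter> {0..1}\<close> by auto
  next
    assume x: "x \<in> {Inf V<..1}"
    have neV: "V \<noteq> {}" using ne unfolding V_def .
    obtain v where "v \<in> V" "v < x" using cInf_less_iff[OF neV bdd, of x] x by auto
    then have "x \<in> S" using up[of v x] x that unfolding V_def by auto
    then show "x \<in> S \<inter> {0..1}" using x V0 by auto
  qed
  show ?thesis unfolding V_def[symmetric]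
    using AE_lborel_singleton[of 0] AE_lborel_singleton[of 1] AE_lborel_singleton[of "Inf V"]
    by eventually_elim (use mem in \<open>auto simp: indicator_def\<close>)
qed

lemma downset_AE:
  fixes S :: "real set"
  assumes down: "\<And>x y. x \<in> S \<Longrightarrow> x < 1 \<Longrightarrow> y \<le> x \<Longrightarrow> 0 < y \<Longrightarrow> y \<in> S"
    and ne: "S \<inter> {0<..<1} \<noteq> {}"
  shows "AE x in lborel. (indicator (S \<inter> {0..1}) x :: ennreal) = indicator {0..Sup (S \<inter> {0<..<1})} x"
proof -
  define V where "V = S \<inter> {0<..<1}"
  have bdd: "bdd_above V" unfolding V_def by (auto intro!: bdd_aboveI[of _ 1])
  have V1: "Sup V \<le> 1" using ne unfolding V_def by (intro cSup_least) auto
  have mem: "x \<in> S \<inter> {0..1} \<longleftrightarrow> x \<in> {0..Sup V}" if "x \<noteq> 0" "x \<noteq> 1" "x \<noteq> Sup V" for x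
  proof
    assume "x \<in> S \<inter> {0..1}"
    then have "x \<in> V" using that unfolding V_def by auto
    then have "x \<le> Sup V" using bdd by (intro cSup_upper)
    then show "x \<in> {0..Sup V}" using that \<open>x \<in> S \<inter> {0..1}\<close> by auto
  next
    assume x: "x \<in> {0..Sup V}"
    then have "x < Sup V" using that by auto
    have neV: "V \<noteq> {}" using ne unfolding V_def .
    obtain v where "v \<in> V" "x < v" using less_cSup_iff[OF neV bdd, of x] \<open>x < Sup V\<close> by auto
    then have "x \<in> S" using down[of v x] x that unfolding V_def by auto
    then show "x \<in> S \<inter> {0..1}" using x V1 by auto
  qed
  show ?thesis unfolding V_def[symmetric]
    using AE_lborel_singleton[of 0] AE_lborel_singleton[of 1] AE_lborel_singleton[of "Sup V"]
    by eventually_elim (use mem in \<open>auto simp: indicator_def\<close>)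
qed



locale dens =
  fixes f :: "real \<Rightarrow> real \<Rightarrow> real"
  assumes fmeas: "(\<lambda>(x, w). f x w) \<in> borel_measurable (lborel \<Otimes>\<^sub>M lborel)"
    and fnn: "\<And>x w. x \<in> {0..1} \<Longrightarrow> w \<in> {0..1} \<Longrightarrow> 0 \<le> f x w"
    and fWpos: "\<And>w. w \<in> {0..1} \<Longrightarrow> 0 < fW f w"
begin

lemma fmeas'[measurable]: "(\<lambda>z. f (fst z) (snd z)) \<in> borel_measurable (lborel \<Otimes>\<^sub>M lborel)"
  using fmeas by (simp add: case_prod_beta')

lemma fswap[measurable]: "(\<lambda>z. f (snd z) (fst z)) \<in> borel_measurable (lborel \<Otimes>\<^sub>M lborel)"
  using measurable_pair_swap[OF fmeas] by (simp add: case_prod_beta')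

lemma slice_meas[measurable]: "(\<lambda>x. f x w) \<in> borel_measurable lborel"
  using measurable_Pair2[OF fswap, of w] by simp

lemma slice_int: assumes "w \<in> {0..1}" shows "set_integrable lborel {0..1} (\<lambda>x. f x w)"
proof (rule ccontr)
  assume "\<not> ?thesis"
  then have "fW f w = 0" unfolding fW_def set_lebesgue_integral_def set_integrable_def
    by (simp add: not_integrable_integral_eq)
  with fWpos[OF assms] show False by simp
qed

lemma mass_set:
  assumes w: "w \<in> {0..1}" and S: "S \<in> sets lborel" "S \<subseteq> {0..1}"
  shows "(\<integral>\<^sup>+x. indicator S x * ennreal (f x w) \<partial>lborel) = ennreal (LINT x:S|lborel. f x w)"
proof -
  have int: "set_integrable lborel S (\<lambda>x. f x w)"
    by (rule set_integrable_subset[OF slice_int[OF w] S(1) S(2)])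
  have "(\<integral>\<^sup>+x. indicator S x * ennreal (f x w) \<partial>lborel) = (\<integral>\<^sup>+x. ennreal (indicator S x * f x w) \<partial>lborel)"
    by (intro nn_integral_cong) (auto simp: indicator_def)
  also have "\<dots> = ennreal (LINT x:S|lborel. f x w)"
  proof -
    have int': "integrable lborel (\<lambda>x. indicator S x * f x w)" using int by (simp add: set_integrable_def)
    have "AE x in lborel. 0 \<le> indicator S x * f x w"
      by (intro AE_I2) (use S w fnn in \<open>auto simp: indicator_def subset_iff\<close>)
    then show ?thesis by (simp add: set_lebesgue_integral_def nn_integral_eq_integral[OF int'])
  qed
  finally show ?thesis .
qed

lemma mass_down:
  assumes w: "w \<in> {0..1}" and b: "b \<in> {0..1}"
  shows "(\<integral>\<^sup>+x. indicator {0..b} x * ennreal (f x w) \<partial>lborel) = ennreal (fW f w * condCDF f b w)"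
  using mass_set[OF w, of "{0..b}"] b fWpos[OF w] by (simp add: condCDF_def)

lemma up_eq:
  assumes w: "w \<in> {0..1}" and a: "a \<in> {0..1}"
  shows "fW f w * (1 - condCDF f a w) = (LINT x:{a<..1}|lborel. f x w)"
proof -
  have i1: "set_integrable lborel {0..a} (\<lambda>x. f x w)"
    by (rule set_integrable_subset[OF slice_int[OF w]]) (use a in auto)
  have i2: "set_integrable lborel {a<..1} (\<lambda>x. f x w)"
    by (rule set_integrable_subset[OF slice_int[OF w]]) (use a in auto)
  have "fW f w = (LINT x:{0..a}|lborel. f x w) + (LINT x:{a<..1}|lborel. f x w)"
  proof -
    have "{0..1} = {0..a} \<union> {a<..1}" using a by auto
    then show ?thesis unfolding fW_def
      by (simp add: set_integral_Un[OF _ i1 i2] ivl_disj_int)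
  qed
  then show ?thesis
    using fWpos[OF w] by (simp add: condCDF_def field_simps)
qed

lemma up_nonneg:
  assumes w: "w \<in> {0..1}" and a: "a \<in> {0..1}"
  shows "0 \<le> 1 - condCDF f a w"
proof -
  have "0 \<le> (LINT x:{a<..1}|lborel. f x w)"
    using fnn w a unfolding set_lebesgue_integral_def
    by (intro integral_nonneg_AE AE_I2) (auto simp: indicator_def)
  then have "0 \<le> fW f w * (1 - condCDF f a w)" using up_eq[OF w a] by simp
  then show ?thesis using fWpos[OF w] by (simp add: zero_le_mult_iff)
qed

lemma down_nonneg:
  assumes w: "w \<in> {0..1}" and b: "b \<in> {0..1}"
  shows "0 \<le> condCDF f b w"
proof -
  have "0 \<le> (LINT x:{0..b}|lborel. f x w)"
    using fnn w b unfolding set_lebesgue_integral_def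
    by (intro integral_nonneg_AE AE_I2) (auto simp: indicator_def)
  then show ?thesis using fWpos[OF w] by (simp add: condCDF_def)
qed

lemma mass_up:
  assumes w: "w \<in> {0..1}" and a: "a \<in> {0..1}"
  shows "(\<integral>\<^sup>+x. indicator {a<..1} x * ennreal (f x w) \<partial>lborel) = ennreal (fW f w * (1 - condCDF f a w))"
proof -
  have i1: "set_integrable lborel {0..a} (\<lambda>x. f x w)"
    by (rule set_integrable_subset[OF slice_int[OF w]]) (use a in auto)
  have i2: "set_integrable lborel {a<..1} (\<lambda>x. f x w)"
    by (rule set_integrable_subset[OF slice_int[OF w]]) (use a in auto)
  have "fW f w = (LINT x:{0..a}|lborel. f x w) + (LINT x:{a<..1}|lborel. f x w)"
  proof -
    have "{0..1} = {0..a} \<union> {a<..1}" using a by auto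
    then show ?thesis unfolding fW_def
      by (simp add: set_integral_Un[OF _ i1 i2] ivl_disj_int)
  qed
  then have "fW f w * (1 - condCDF f a w) = (LINT x:{a<..1}|lborel. f x w)"
    using fWpos[OF w] by (simp add: condCDF_def field_simps)
  moreover have sub: "{a<..1} \<subseteq> {0..1}" using a by auto
  ultimately show ?thesis using mass_set[OF w _ sub] by simp
qed

end


definition psiP :: "(real \<Rightarrow> real) \<Rightarrow> real \<Rightarrow> real \<Rightarrow> real" where
  "psiP h c x = max 0 (h x - h c)"
definition psiQ :: "(real \<Rightarrow> real) \<Rightarrow> real \<Rightarrow> real \<Rightarrow> real" where
  "psiQ h c x = max 0 (h c - h x)"

context dens
begin

definition NN :: "(real \<Rightarrow> real) \<Rightarrow> real \<Rightarrow> ennreal" where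
  "NN psi w = (\<integral>\<^sup>+x. ennreal (psi x) * (ennreal (f x w) * indicator {0..1} x) \<partial>lborel)"

lemma set_rearr:
  "(\<integral>\<^sup>+x. indicator S x * (ennreal (f x w) * indicator {0..1} x) \<partial>lborel)
   = (\<integral>\<^sup>+x. indicator (S \<inter> {0..1}) x * ennreal (f x w) \<partial>lborel)"
  by (intro nn_integral_cong) (auto simp: indicator_def)

lemma empty_case:
  assumes "S \<inter> {0<..<1} = {}"
  shows "(\<integral>\<^sup>+x. indicator (S \<inter> {0..1}) x * ennreal (f x w) \<partial>lborel) = 0"
proof -
  have AE: "AE x in lborel. indicator (S \<inter> {0..1}) x * ennreal (f x w) = 0"
    using AE_lborel_singleton[of 0] AE_lborel_singleton[of 1]
    by eventually_elim (use assms in \<open>auto simp: indicator_def\<close>)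
  from nn_integral_cong_AE[OF AE] show ?thesis by simp
qed

lemma compP:
  assumes hm[measurable]: "h \<in> borel_measurable lborel" and mono: "mono_on {0<..<1} h"
    and c: "c \<in> {0<..<1}" and w: "w \<in> {0..1}" and w': "w' \<in> {0..1}" and k: "0 \<le> k"
    and cond: "\<And>a. c \<le> a \<Longrightarrow> a < 1 \<Longrightarrow> k * (1 - condCDF f a w) \<le> 1 - condCDF f a w'"
  shows "ennreal (k * fW f w') * NN (psiP h c) w \<le> ennreal (fW f w) * NN (psiP h c) w'"
  unfolding NN_def
proof (rule layer)
  show "psiP h c \<in> borel_measurable lborel" unfolding psiP_def by measurable
  show "(\<lambda>x. ennreal (f x w) * indicator {0..1} x) \<in> borel_measurable lborel" by measurable
  show "(\<lambda>x. ennreal (f x w') * indicator {0..1} x) \<in> borel_measurable lborel" by measurable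
  fix s :: real assume s: "0 < s"
  define S where "S = {x. s < psiP h c x}"
  have main: "ennreal (k * fW f w') * (\<integral>\<^sup>+x. indicator (S \<inter> {0..1}) x * ennreal (f x w) \<partial>lborel)
     \<le> ennreal (fW f w) * (\<integral>\<^sup>+x. indicator (S \<inter> {0..1}) x * ennreal (f x w') \<partial>lborel)"
  proof (cases "S \<inter> {0<..<1} = {}")
    case True
    then show ?thesis by (simp add: empty_case)
  next
    case False
    define a where "a = Inf (S \<inter> {0<..<1})"
    have up: "y \<in> S" if "x \<in> S" "0 < x" "x \<le> y" "y < 1" for x y
    proof -
      have "h x \<le> h y" by (rule mono_onD[OF mono]) (use that in auto)
      then show ?thesis using that unfolding S_def psiP_def by auto
    qed
    have bdd: "bdd_below (S \<inter> {0<..<1})" by (auto intro!: bdd_belowI[of _ 0])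
    have ac: "c \<le> a" unfolding a_def
    proof (rule cInf_greatest[OF False])
      fix v assume v: "v \<in> S \<inter> {0<..<1}"
      show "c \<le> v"
      proof (rule ccontr)
        assume "\<not> c \<le> v"
        then have "h v \<le> h c" using mono_onD[OF mono, of v c] v c by auto
        then show False using v s unfolding S_def psiP_def by auto
      qed
    qed
    have a1: "a < 1"
    proof -
      obtain v where "v \<in> S \<inter> {0<..<1}" using False by blast
      then have "a \<le> v" unfolding a_def using bdd by (intro cInf_lower)
      then show ?thesis using \<open>v \<in> S \<inter> {0<..<1}\<close> by auto
    qed
    have a01: "a \<in> {0..1}" using ac a1 c by auto
    have ne: "S \<inter> {0<..<1} \<noteq> {}" using False .
    have AEi: "AE x in lborel. (indicator (S \<inter> {0..1}) x :: ennreal) = indicator {a<..1} x"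
      unfolding a_def by (rule upset_AE[OF up ne])
    have eq: "(\<integral>\<^sup>+x. indicator (S \<inter> {0..1}) x * ennreal (f x v) \<partial>lborel) = ennreal (fW f v * (1 - condCDF f a v))"
      if v: "v \<in> {0..1}" for v
    proof -
      have "(\<integral>\<^sup>+x. indicator (S \<inter> {0..1}) x * ennreal (f x v) \<partial>lborel) = (\<integral>\<^sup>+x. indicator {a<..1} x * ennreal (f x v) \<partial>lborel)"
        using AEi by (intro nn_integral_cong_AE) (auto elim!: eventually_mono)
      also have "\<dots> = ennreal (fW f v * (1 - condCDF f a v))" by (rule mass_up[OF v a01])
      finally show ?thesis .
    qed
    have F0: "0 \<le> 1 - condCDF f a v" if v: "v \<in> {0..1}" for v
      by (rule up_nonneg[OF v a01])
    have "k * fW f w' * (fW f w * (1 - condCDF f a w)) = fW f w * fW f w' * (k * (1 - condCDF f a w))"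
      by (simp add: algebra_simps)
    also have "\<dots> \<le> fW f w * fW f w' * (1 - condCDF f a w')"
      using cond[OF ac a1] fWpos[OF w] fWpos[OF w'] by (intro mult_left_mono) auto
    also have "\<dots> = fW f w * (fW f w' * (1 - condCDF f a w'))" by simp
    finally have ineq: "k * fW f w' * (fW f w * (1 - condCDF f a w)) \<le> fW f w * (fW f w' * (1 - condCDF f a w'))" .
    show ?thesis unfolding eq[OF w] eq[OF w']
      using ineq k fWpos[OF w] fWpos[OF w'] F0[OF w] F0[OF w']
      by (simp add: ennreal_mult[symmetric] ennreal_leI)
  qed
  then show "ennreal (k * fW f w') * (\<integral>\<^sup>+x. indicator {x. s < psiP h c x} x * (ennreal (f x w) * indicator {0..1} x) \<partial>lborel)
     \<le> ennreal (fW f w) * (\<integral>\<^sup>+x. indicator {x. s < psiP h c x} x * (ennreal (f x w') * indicator {0..1} x) \<partial>lborel)"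
    unfolding S_def by (simp add: set_rearr)
qed


lemma compQ:
  assumes hm[measurable]: "h \<in> borel_measurable lborel" and mono: "mono_on {0<..<1} h"
    and c: "c \<in> {0<..<1}" and w: "w \<in> {0..1}" and w': "w' \<in> {0..1}" and k: "0 \<le> k"
    and cond: "\<And>a. 0 < a \<Longrightarrow> a \<le> c \<Longrightarrow> k * condCDF f a w \<le> condCDF f a w'"
  shows "ennreal (k * fW f w') * NN (psiQ h c) w \<le> ennreal (fW f w) * NN (psiQ h c) w'"
  unfolding NN_def
proof (rule layer)
  show "psiQ h c \<in> borel_measurable lborel" unfolding psiQ_def by measurable
  show "(\<lambda>x. ennreal (f x w) * indicator {0..1} x) \<in> borel_measurable lborel" by measurable
  show "(\<lambda>x. ennreal (f x w') * indicator {0..1} x) \<in> borel_measurable lborel" by measurable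
  fix s :: real assume s: "0 < s"
  define S where "S = {x. s < psiQ h c x}"
  have main: "ennreal (k * fW f w') * (\<integral>\<^sup>+x. indicator (S \<inter> {0..1}) x * ennreal (f x w) \<partial>lborel)
     \<le> ennreal (fW f w) * (\<integral>\<^sup>+x. indicator (S \<inter> {0..1}) x * ennreal (f x w') \<partial>lborel)"
  proof (cases "S \<inter> {0<..<1} = {}")
    case True
    then show ?thesis by (simp add: empty_case)
  next
    case False
    define a where "a = Sup (S \<inter> {0<..<1})"
    have down: "y \<in> S" if "x \<in> S" "x < 1" "y \<le> x" "0 < y" for x y
    proof -
      have "h y \<le> h x" by (rule mono_onD[OF mono]) (use that in auto)
      then show ?thesis using that unfolding S_def psiQ_def by auto
    qed
    have bdd: "bdd_above (S \<inter> {0<..<1})" by (auto intro!: bdd_aboveI[of _ 1])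
    have ac: "a \<le> c" unfolding a_def
    proof (rule cSup_least[OF False])
      fix v assume v: "v \<in> S \<inter> {0<..<1}"
      show "v \<le> c"
      proof (rule ccontr)
        assume "\<not> v \<le> c"
        then have "h c \<le> h v" using mono_onD[OF mono, of c v] v c by auto
        then show False using v s unfolding S_def psiQ_def by auto
      qed
    qed
    have a0: "0 < a"
    proof -
      obtain v where "v \<in> S \<inter> {0<..<1}" using False by blast
      then have "v \<le> a" unfolding a_def using bdd by (intro cSup_upper)
      then show ?thesis using \<open>v \<in> S \<inter> {0<..<1}\<close> by auto
    qed
    have a01: "a \<in> {0..1}" using ac a0 c by auto
    have ne: "S \<inter> {0<..<1} \<noteq> {}" using False .
    have AEi: "AE x in lborel. (indicator (S \<inter> {0..1}) x :: ennreal) = indicator {0..a} x"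
      unfolding a_def by (rule downset_AE[OF down ne])
    have eq: "(\<integral>\<^sup>+x. indicator (S \<inter> {0..1}) x * ennreal (f x v) \<partial>lborel) = ennreal (fW f v * condCDF f a v)"
      if v: "v \<in> {0..1}" for v
    proof -
      have "(\<integral>\<^sup>+x. indicator (S \<inter> {0..1}) x * ennreal (f x v) \<partial>lborel) = (\<integral>\<^sup>+x. indicator {0..a} x * ennreal (f x v) \<partial>lborel)"
        using AEi by (intro nn_integral_cong_AE) (auto elim!: eventually_mono)
      also have "\<dots> = ennreal (fW f v * condCDF f a v)" by (rule mass_down[OF v a01])
      finally show ?thesis .
    qed
    have F0: "0 \<le> condCDF f a v" if v: "v \<in> {0..1}" for v
      by (rule down_nonneg[OF v a01])
    have "k * fW f w' * (fW f w * condCDF f a w) = fW f w * fW f w' * (k * condCDF f a w)"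
      by (simp add: algebra_simps)
    also have "\<dots> \<le> fW f w * fW f w' * condCDF f a w'"
      using cond[OF a0 ac] fWpos[OF w] fWpos[OF w'] by (intro mult_left_mono) auto
    also have "\<dots> = fW f w * (fW f w' * condCDF f a w')" by simp
    finally have ineq: "k * fW f w' * (fW f w * condCDF f a w) \<le> fW f w * (fW f w' * condCDF f a w')" .
    show ?thesis unfolding eq[OF w] eq[OF w']
      using ineq k fWpos[OF w] fWpos[OF w'] F0[OF w] F0[OF w']
      by (simp add: ennreal_mult[symmetric] ennreal_leI)
  qed
  then show "ennreal (k * fW f w') * (\<integral>\<^sup>+x. indicator {x. s < psiQ h c x} x * (ennreal (f x w) * indicator {0..1} x) \<partial>lborel)
     \<le> ennreal (fW f w) * (\<integral>\<^sup>+x. indicator {x. s < psiQ h c x} x * (ennreal (f x w') * indicator {0..1} x) \<partial>lborel)"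
    unfolding S_def by (simp add: set_rearr)
qed

end


locale msetting = dens f for f +
  fixes h :: "real \<Rightarrow> real"
  assumes hmeas[measurable]: "h \<in> borel_measurable lborel"
    and h2: "set_integrable lborel {0..1} (\<lambda>x. (h x)\<^sup>2)"
    and f2: "(\<integral>\<^sup>+ z \<in> {0..1} \<times> {0..1}. ennreal ((case z of (x, w) \<Rightarrow> f x w)\<^sup>2) \<partial>(lborel \<Otimes>\<^sub>M lborel)) < \<infinity>"
begin

definition Hs where "Hs = (LINT x:{0..1}|lborel. (h x)\<^sup>2)"
definition J where "J w = (\<integral>\<^sup>+x. ennreal ((f x w)\<^sup>2) * indicator {0..1} x \<partial>lborel)"

lemma hsq: "(\<integral>\<^sup>+x. ennreal ((h x)\<^sup>2) * indicator {0..1} x \<partial>lborel) = ennreal Hs"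
proof -
  have int: "integrable lborel (\<lambda>x. indicator {0..1} x * (h x)\<^sup>2)"
    using h2 by (simp add: set_integrable_def)
  have "(\<integral>\<^sup>+x. ennreal ((h x)\<^sup>2) * indicator {0..1} x \<partial>lborel) = (\<integral>\<^sup>+x. ennreal (indicator {0..1} x * (h x)\<^sup>2) \<partial>lborel)"
    by (intro nn_integral_cong) (auto simp: indicator_def)
  also have "\<dots> = ennreal Hs" unfolding Hs_def set_lebesgue_integral_def
    by (simp add: nn_integral_eq_integral[OF int])
  finally show ?thesis .
qed

lemma J_meas[measurable]: "J \<in> borel_measurable lborel"
  unfolding J_def by measurable

lemma f2it: "(\<integral>\<^sup>+w. J w * indicator {0..1} w \<partial>lborel) < \<infinity>"
proof -
  have [measurable]: "(\<lambda>z. ennreal ((f (fst z) (snd z))\<^sup>2) * indicator ({0..1} \<times> {0..1}) z) \<in> borel_measurable (lborel \<Otimes>\<^sub>M lborel)"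
    by measurable
  have "(\<integral>\<^sup>+w. J w * indicator {0..1} w \<partial>lborel) =
    (\<integral>\<^sup>+ w. (\<integral>\<^sup>+ x. (\<lambda>z. ennreal ((f (fst z) (snd z))\<^sup>2) * indicator ({0..1} \<times> {0..1}) z) (x, w) \<partial>lborel) \<partial>lborel)"
    unfolding J_def
    by (intro nn_integral_cong) (auto simp: indicator_def nn_integral_multc[symmetric] mult.assoc intro!: nn_integral_cong)
  also have "\<dots> = (\<integral>\<^sup>+ z. ennreal ((f (fst z) (snd z))\<^sup>2) * indicator ({0..1} \<times> {0..1}) z \<partial>(lborel \<Otimes>\<^sub>M lborel))"
    by (rule lborel_pair.nn_integral_snd) measurable
  also have "\<dots> < \<infinity>" using f2 by (simp add: case_prod_beta')
  finally show ?thesis .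
qed

lemma Gae: "AE w in lborel. w \<in> {0..1} \<longrightarrow> (\<integral>\<^sup>+x. ennreal (\<bar>h x\<bar> * f x w) * indicator {0..1} x \<partial>lborel) < \<infinity>"
proof -
  define I where "I w = (\<integral>\<^sup>+x. ennreal (\<bar>h x\<bar> * f x w) * indicator {0..1} x \<partial>lborel)" for w
  have [measurable]: "I \<in> borel_measurable lborel" unfolding I_def by measurable
  have pt: "ennreal (\<bar>h x\<bar> * f x w) \<le> ennreal ((h x)\<^sup>2) + ennreal ((f x w)\<^sup>2)" for x w
  proof -
    have "0 \<le> (\<bar>h x\<bar> - f x w)\<^sup>2" by simp
    then have e: "2 * (\<bar>h x\<bar> * f x w) \<le> (h x)\<^sup>2 + (f x w)\<^sup>2"
      by (simp add: power2_diff power2_abs)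
    have "0 \<le> (h x)\<^sup>2" "0 \<le> (f x w)\<^sup>2" by simp_all
    then have "\<bar>h x\<bar> * f x w \<le> (h x)\<^sup>2 + (f x w)\<^sup>2" using e by linarith
    then have "ennreal (\<bar>h x\<bar> * f x w) \<le> ennreal ((h x)\<^sup>2 + (f x w)\<^sup>2)" by (rule ennreal_leI)
    also have "\<dots> = ennreal ((h x)\<^sup>2) + ennreal ((f x w)\<^sup>2)" by (rule ennreal_plus) simp_all
    finally show ?thesis .
  qed
  have Ib: "I w \<le> ennreal Hs + J w" for w
  proof -
    have "I w \<le> (\<integral>\<^sup>+x. ennreal ((h x)\<^sup>2) * indicator {0..1} x + ennreal ((f x w)\<^sup>2) * indicator {0..1} x \<partial>lborel)"
      unfolding I_def
    proof (rule nn_integral_mono)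
      fix x
      show "ennreal (\<bar>h x\<bar> * f x w) * indicator {0..1} x \<le> ennreal ((h x)\<^sup>2) * indicator {0..1} x + ennreal ((f x w)\<^sup>2) * indicator {0..1} x"
      proof (cases "x \<in> {0..1}")
        case True then show ?thesis using pt[of x w] by simp
      next
        case False then show ?thesis by simp
      qed
    qed
    also have "\<dots> = ennreal Hs + J w"
      by (subst nn_integral_add) (auto simp: hsq J_def)
    finally show ?thesis .
  qed
  have "(\<integral>\<^sup>+w. I w * indicator {0..1} w \<partial>lborel) \<le> (\<integral>\<^sup>+w. ennreal Hs * indicator {0..1} w + J w * indicator {0..1} w \<partial>lborel)"
    using Ib by (intro nn_integral_mono) (auto simp: indicator_def)
  also have "\<dots> = ennreal Hs + (\<integral>\<^sup>+w. J w * indicator {0..1} w \<partial>lborel)"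
    by (subst nn_integral_add) (auto simp: nn_integral_cmult_indicator)
  also have "\<dots> < \<infinity>" using f2it by simp
  finally have "(\<integral>\<^sup>+w. I w * indicator {0..1} w \<partial>lborel) \<noteq> \<infinity>" by simp
  from nn_integral_PInf_AE[OF _ this] have "AE w in lborel. I w * indicator {0..1} w \<noteq> \<infinity>" by simp
  then show ?thesis unfolding I_def[symmetric]
    by eventually_elim (auto simp: indicator_def top.not_eq_extremum)
qed

lemma opT_meas[measurable]: "opT f h \<in> borel_measurable lborel"
proof -
  have "opT f h = (\<lambda>w. LINT x:{0..1}|lborel. h x * f x w)" by (simp add: opT_def fun_eq_iff)
  also have "\<dots> \<in> borel_measurable lborel" unfolding set_lebesgue_integral_def by measurable
  finally show ?thesis .
qed

lemma opT_bound: "ennreal ((opT f h w)\<^sup>2) \<le> ennreal Hs * J w"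
proof -
  define u where "u x = ennreal \<bar>h x\<bar> * indicator {0..1} x" for x
  define v where "v x = ennreal \<bar>f x w\<bar> * indicator {0..1} x" for x
  have [measurable]: "u \<in> borel_measurable lborel" "v \<in> borel_measurable lborel"
    unfolding u_def v_def by measurable
  have a: "ennreal \<bar>opT f h w\<bar> \<le> (\<integral>\<^sup>+x. u x * v x \<partial>lborel)"
  proof (cases "integrable lborel (\<lambda>x. indicator {0..1} x *\<^sub>R (h x * f x w))")
    case True
    have "ennreal \<bar>opT f h w\<bar> \<le> (\<integral>\<^sup>+x. norm (indicator {0..1} x *\<^sub>R (h x * f x w)) \<partial>lborel)"
      unfolding opT_def set_lebesgue_integral_def
      using integral_norm_bound_ennreal[OF True] by simp
    also have "\<dots> = (\<integral>\<^sup>+x. u x * v x \<partial>lborel)"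
      unfolding u_def v_def
      by (intro nn_integral_cong) (auto simp: indicator_def abs_mult ennreal_mult)
    finally show ?thesis .
  next
    case False
    then show ?thesis unfolding opT_def set_lebesgue_integral_def
      by (simp add: not_integrable_integral_eq)
  qed
  have "ennreal ((opT f h w)\<^sup>2) = (ennreal \<bar>opT f h w\<bar>)\<^sup>2"
    by (simp add: ennreal_power power2_abs)
  also have "\<dots> \<le> (\<integral>\<^sup>+x. u x * v x \<partial>lborel)\<^sup>2"
    using a by (rule power_mono_ennreal)
  also have "\<dots> \<le> (\<integral>\<^sup>+x. u x ^ 2 \<partial>lborel) * (\<integral>\<^sup>+x. v x ^ 2 \<partial>lborel)"
    by (rule Cauchy_Schwarz_nn_integral) measurable
  also have "(\<integral>\<^sup>+x. u x ^ 2 \<partial>lborel) = ennreal Hs"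
    unfolding hsq[symmetric] u_def
    by (intro nn_integral_cong) (auto simp: indicator_def ennreal_power power2_abs)
  also have "(\<integral>\<^sup>+x. v x ^ 2 \<partial>lborel) = J w"
    unfolding J_def v_def
    by (intro nn_integral_cong) (auto simp: indicator_def ennreal_power power2_abs)
  finally show ?thesis .
qed

lemma Th2_int: "set_integrable lborel {0..1} (\<lambda>w. (opT f h w)\<^sup>2)"
  unfolding set_integrable_def
proof (rule integrableI_bounded)
  show "(\<lambda>w. indicat_real {0..1} w *\<^sub>R (opT f h w)\<^sup>2) \<in> borel_measurable lborel" by measurable
  have "(\<integral>\<^sup>+w. ennreal (norm (indicat_real {0..1} w *\<^sub>R (opT f h w)\<^sup>2)) \<partial>lborel)
     \<le> (\<integral>\<^sup>+w. ennreal Hs * (J w * indicator {0..1} w) \<partial>lborel)"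
    using opT_bound by (intro nn_integral_mono) (auto simp: indicator_def)
  also have "\<dots> = ennreal Hs * (\<integral>\<^sup>+w. J w * indicator {0..1} w \<partial>lborel)"
    by (rule nn_integral_cmult) measurable
  also have "\<dots> < \<infinity>" using f2it by (simp add: ennreal_mult_less_top)
  finally show "(\<integral>\<^sup>+w. ennreal (norm (indicat_real {0..1} w *\<^sub>R (opT f h w)\<^sup>2)) \<partial>lborel) < \<infinity>" .
qed

end


context msetting
begin

definition Iabs where "Iabs w = (\<integral>\<^sup>+x. ennreal (\<bar>h x\<bar> * f x w) * indicator {0..1} x \<partial>lborel)"

lemma NN_cong:
  assumes w: "w \<in> {0..1}" and nn: "\<And>x. 0 \<le> psi x"
  shows "NN psi w = (\<integral>\<^sup>+x. ennreal (indicator {0..1} x * (psi x * f x w)) \<partial>lborel)"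
  unfolding NN_def
proof (rule nn_integral_cong)
  fix x show "ennreal (psi x) * (ennreal (f x w) * indicator {0..1} x) = ennreal (indicator {0..1} x * (psi x * f x w))"
    using nn[of x] fnn[of x w] w by (cases "x \<in> {0..1}") (auto simp: ennreal_mult)
qed

lemma fW_nn: assumes w: "w \<in> {0..1}"
  shows "(\<integral>\<^sup>+x. ennreal (f x w) * indicator {0..1} x \<partial>lborel) = ennreal (fW f w)"
  using mass_set[OF w, of "{0..1}"] unfolding fW_def by (simp add: mult.commute)

lemma psi_nn: "0 \<le> psiP h c x" "0 \<le> psiQ h c x" by (auto simp: psiP_def psiQ_def)

lemma psi_meas[measurable]: "psiP h c \<in> borel_measurable lborel" "psiQ h c \<in> borel_measurable lborel"
  unfolding psiP_def psiQ_def by measurable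

lemma NN_le:
  assumes w: "w \<in> {0..1}" and psi: "\<And>x. 0 \<le> psi x" "\<And>x. psi x \<le> \<bar>h x\<bar> + \<bar>h c\<bar>"
  shows "NN psi w \<le> Iabs w + ennreal \<bar>h c\<bar> * ennreal (fW f w)"
proof -
  have "NN psi w \<le> (\<integral>\<^sup>+x. ennreal (\<bar>h x\<bar> * f x w) * indicator {0..1} x + ennreal \<bar>h c\<bar> * (ennreal (f x w) * indicator {0..1} x) \<partial>lborel)"
    unfolding NN_def
  proof (rule nn_integral_mono)
    fix x
    show "ennreal (psi x) * (ennreal (f x w) * indicator {0..1} x) \<le> ennreal (\<bar>h x\<bar> * f x w) * indicator {0..1} x + ennreal \<bar>h c\<bar> * (ennreal (f x w) * indicator {0..1} x)"
    proof (cases "x \<in> {0..1}")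
      case True
      have f0: "0 \<le> f x w" using fnn[of x w] True w by auto
      have "psi x * f x w \<le> \<bar>h x\<bar> * f x w + \<bar>h c\<bar> * f x w"
        using mult_right_mono[OF psi(2)[of x] f0] by (simp add: algebra_simps)
      then have "ennreal (psi x * f x w) \<le> ennreal (\<bar>h x\<bar> * f x w + \<bar>h c\<bar> * f x w)" by (rule ennreal_leI)
      also have "\<dots> = ennreal (\<bar>h x\<bar> * f x w) + ennreal \<bar>h c\<bar> * ennreal (f x w)"
        using f0 by (simp add: ennreal_mult)
      finally show ?thesis using True psi(1)[of x] f0 by (simp add: ennreal_mult)
    qed simp
  qed
  also have "\<dots> = Iabs w + ennreal \<bar>h c\<bar> * ennreal (fW f w)"
    unfolding Iabs_def
    by (subst nn_integral_add) (auto simp: nn_integral_cmult fW_nn[OF w])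
  finally show ?thesis .
qed

lemma Iabs_le:
  assumes w: "w \<in> {0..1}"
  shows "Iabs w \<le> NN (psiP h c) w + NN (psiQ h c) w + ennreal \<bar>h c\<bar> * ennreal (fW f w)"
proof -
  have "Iabs w \<le> (\<integral>\<^sup>+x. ennreal (psiP h c x) * (ennreal (f x w) * indicator {0..1} x) + ennreal (psiQ h c x) * (ennreal (f x w) * indicator {0..1} x) + ennreal \<bar>h c\<bar> * (ennreal (f x w) * indicator {0..1} x) \<partial>lborel)"
    unfolding Iabs_def
  proof (rule nn_integral_mono)
    fix x
    show "ennreal (\<bar>h x\<bar> * f x w) * indicator {0..1} x \<le> ennreal (psiP h c x) * (ennreal (f x w) * indicator {0..1} x) + ennreal (psiQ h c x) * (ennreal (f x w) * indicator {0..1} x) + ennreal \<bar>h c\<bar> * (ennreal (f x w) * indicator {0..1} x)"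
    proof (cases "x \<in> {0..1}")
      case True
      have f0: "0 \<le> f x w" using fnn[of x w] True w by auto
      have le: "\<bar>h x\<bar> \<le> psiP h c x + psiQ h c x + \<bar>h c\<bar>" unfolding psiP_def psiQ_def by linarith
      have "\<bar>h x\<bar> * f x w \<le> psiP h c x * f x w + psiQ h c x * f x w + \<bar>h c\<bar> * f x w"
        using mult_right_mono[OF le f0] by (simp add: algebra_simps)
      then have "ennreal (\<bar>h x\<bar> * f x w) \<le> ennreal (psiP h c x * f x w + psiQ h c x * f x w + \<bar>h c\<bar> * f x w)" by (rule ennreal_leI)
      also have "\<dots> = ennreal (psiP h c x) * ennreal (f x w) + ennreal (psiQ h c x) * ennreal (f x w) + ennreal \<bar>h c\<bar> * ennreal (f x w)"
      proof -
        have n1: "0 \<le> psiP h c x * f x w" "0 \<le> psiQ h c x * f x w" "0 \<le> \<bar>h c\<bar> * f x w"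
          using f0 psi_nn[of c x] by auto
        have "ennreal (psiP h c x * f x w + psiQ h c x * f x w + \<bar>h c\<bar> * f x w) = ennreal (psiP h c x * f x w + psiQ h c x * f x w) + ennreal (\<bar>h c\<bar> * f x w)"
          using n1 by (intro ennreal_plus) auto
        also have "ennreal (psiP h c x * f x w + psiQ h c x * f x w) = ennreal (psiP h c x * f x w) + ennreal (psiQ h c x * f x w)"
          using n1 by (intro ennreal_plus) auto
        finally show ?thesis using f0 psi_nn[of c x] by (simp only: ennreal_mult)
      qed
      finally show ?thesis using True by simp
    qed simp
  qed
  also have "\<dots> = NN (psiP h c) w + NN (psiQ h c) w + ennreal \<bar>h c\<bar> * ennreal (fW f w)"
  proof -
    let ?g = "\<lambda>x. ennreal (f x w) * indicator {0..1} x"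
    have "(\<integral>\<^sup>+x. ennreal (psiP h c x) * ?g x + ennreal (psiQ h c x) * ?g x + ennreal \<bar>h c\<bar> * ?g x \<partial>lborel)
       = (\<integral>\<^sup>+x. ennreal (psiP h c x) * ?g x + ennreal (psiQ h c x) * ?g x \<partial>lborel) + (\<integral>\<^sup>+x. ennreal \<bar>h c\<bar> * ?g x \<partial>lborel)"
      by (rule nn_integral_add) measurable
    also have "(\<integral>\<^sup>+x. ennreal (psiP h c x) * ?g x + ennreal (psiQ h c x) * ?g x \<partial>lborel)
       = (\<integral>\<^sup>+x. ennreal (psiP h c x) * ?g x \<partial>lborel) + (\<integral>\<^sup>+x. ennreal (psiQ h c x) * ?g x \<partial>lborel)"
      by (rule nn_integral_add) measurable
    also have "(\<integral>\<^sup>+x. ennreal \<bar>h c\<bar> * ?g x \<partial>lborel) = ennreal \<bar>h c\<bar> * ennreal (fW f w)"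
      by (subst nn_integral_cmult) (auto simp: fW_nn[OF w])
    finally show ?thesis unfolding NN_def .
  qed
  finally show ?thesis .
qed


lemma int_of_NN:
  assumes w: "w \<in> {0..1}" and nn: "\<And>x. 0 \<le> psi x" and m[measurable]: "psi \<in> borel_measurable lborel"
    and fin: "NN psi w < \<infinity>"
  shows "integrable lborel (\<lambda>x. indicator {0..1} x * (psi x * f x w))"
    and "NN psi w = ennreal (LINT x|lborel. indicator {0..1} x * (psi x * f x w))"
proof -
  have e: "(\<integral>\<^sup>+x. ennreal (indicator {0..1} x * (psi x * f x w)) \<partial>lborel) = ennreal (enn2real (NN psi w))"
    using NN_cong[OF w nn] fin by simp
  have nnAE: "AE x in lborel. 0 \<le> indicator {0..1} x * (psi x * f x w)"
    using nn fnn w by (intro AE_I2) (auto simp: indicator_def)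
  show i: "integrable lborel (\<lambda>x. indicator {0..1} x * (psi x * f x w))"
    by (rule integrableI_nn_integral_finite[OF _ nnAE e]) measurable
  show "NN psi w = ennreal (LINT x|lborel. indicator {0..1} x * (psi x * f x w))"
    using NN_cong[OF w nn] nn_integral_eq_integral[OF i nnAE] by simp
qed

lemma decomp:
  assumes w: "w \<in> {0..1}" and finP: "NN (psiP h c) w < \<infinity>" and finQ: "NN (psiQ h c) w < \<infinity>"
  shows "opT f h w = h c * fW f w + enn2real (NN (psiP h c) w) - enn2real (NN (psiQ h c) w)"
proof -
  note iP = int_of_NN[OF w psi_nn(1) psi_meas(1) finP]
  note iQ = int_of_NN[OF w psi_nn(2) psi_meas(2) finQ]
  have iF: "integrable lborel (\<lambda>x. indicator {0..1} x * f x w)"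
    using slice_int[OF w] by (simp add: set_integrable_def)
  have "opT f h w = (LINT x|lborel. h c * (indicator {0..1} x * f x w) + indicator {0..1} x * (psiP h c x * f x w) - indicator {0..1} x * (psiQ h c x * f x w))"
    unfolding opT_def set_lebesgue_integral_def
    by (intro Bochner_Integration.integral_cong) (auto simp: psiP_def psiQ_def indicator_def algebra_simps max_def)
  also have "\<dots> = h c * (LINT x|lborel. indicator {0..1} x * f x w) + (LINT x|lborel. indicator {0..1} x * (psiP h c x * f x w)) - (LINT x|lborel. indicator {0..1} x * (psiQ h c x * f x w))"
    using iP(1) iQ(1) iF by simp
  also have "(LINT x|lborel. indicator {0..1} x * f x w) = fW f w"
    unfolding fW_def set_lebesgue_integral_def by simp
  also have "(LINT x|lborel. indicator {0..1} x * (psiP h c x * f x w)) = enn2real (NN (psiP h c) w)"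
  proof -
    have "0 \<le> (LINT x|lborel. indicator {0..1} x * (psiP h c x * f x w))"
      by (intro integral_nonneg_AE AE_I2) (use psi_nn fnn w in \<open>auto simp: indicator_def\<close>)
    then show ?thesis using iP(2) by simp
  qed
  also have "(LINT x|lborel. indicator {0..1} x * (psiQ h c x * f x w)) = enn2real (NN (psiQ h c) w)"
  proof -
    have "0 \<le> (LINT x|lborel. indicator {0..1} x * (psiQ h c x * f x w))"
      by (intro integral_nonneg_AE AE_I2) (use psi_nn fnn w in \<open>auto simp: indicator_def\<close>)
    then show ?thesis using iQ(2) by simp
  qed
  finally show ?thesis .
qed

end


locale full = msetting f h for f h +
  fixes C_F c_f c_W x1 x2 xt1 xt2 w1 w2 :: real
  assumes geo: "0 \<le> x1" "x1 < xt1" "xt1 < xt2" "xt2 < x2" "x2 \<le> 1" "0 < w1" "w1 < w2" "w2 < 1"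
    and A: "\<And>x w' w''. x \<in> {0<..<1} \<Longrightarrow> w' \<in> {0<..<1} \<Longrightarrow> w'' \<in> {0<..<1} \<Longrightarrow> w' \<le> w''
        \<Longrightarrow> condCDF f x w' \<ge> condCDF f x w''"
    and CF: "1 < C_F"
    and B1: "\<And>x. x \<in> {0<..<x2} \<Longrightarrow> condCDF f x w1 \<ge> C_F * condCDF f x w2"
    and B2: "\<And>x. x \<in> {x1<..<1} \<Longrightarrow> C_F * (1 - condCDF f x w1) \<le> 1 - condCDF f x w2"
    and cf: "0 < c_f" and dens: "\<And>x w. x \<in> {x1..x2} \<Longrightarrow> w \<in> {w1, w2} \<Longrightarrow> condDens f x w \<ge> c_f"
    and cW: "0 < c_W" and fWlb: "\<And>w. w \<in> {0..1} \<Longrightarrow> c_W \<le> fW f w"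
    and hmono: "mono_on {0<..<1} h"
begin

abbreviation "NP \<equiv> NN (psiP h xt1)"
abbreviation "NQ \<equiv> NN (psiQ h xt1)"

lemma c01: "xt1 \<in> {0<..<1}" using geo by auto

lemma monoP:
  assumes "w \<in> {0<..<1}" "w' \<in> {0<..<1}" "w \<le> w'"
  shows "ennreal (fW f w') * NP w \<le> ennreal (fW f w) * NP w'"
  using compP[OF hmeas hmono c01, of w w' 1] A[of _ w w'] assms c01 by auto

lemma monoQ:
  assumes "w \<in> {0<..<1}" "w' \<in> {0<..<1}" "w \<le> w'"
  shows "ennreal (fW f w) * NQ w' \<le> ennreal (fW f w') * NQ w"
  using compQ[OF hmeas hmono c01, of w' w 1] A[of _ w w'] assms c01 by auto

lemma CFP: "ennreal (C_F * fW f w2) * NP w1 \<le> ennreal (fW f w1) * NP w2"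
  by (rule compP[OF hmeas hmono c01]) (use geo CF B2 in auto)

lemma CFQ: "ennreal (C_F * fW f w1) * NQ w2 \<le> ennreal (fW f w2) * NQ w1"
  by (rule compQ[OF hmeas hmono c01]) (use geo CF B1 in auto)

lemma good_fin:
  assumes w: "w \<in> {0..1}" and g: "Iabs w < \<infinity>"
  shows "NP w < \<infinity>" "NQ w < \<infinity>"
proof -
  have b: "ennreal \<bar>h xt1\<bar> * ennreal (fW f w) < \<infinity>" by (simp add: ennreal_mult_less_top)
  have "NP w \<le> Iabs w + ennreal \<bar>h xt1\<bar> * ennreal (fW f w)"
    by (rule NN_le[OF w]) (auto simp: psiP_def)
  also have "\<dots> < \<infinity>" using g b by simp
  finally show "NP w < \<infinity>" .
  have "NQ w \<le> Iabs w + ennreal \<bar>h xt1\<bar> * ennreal (fW f w)"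
    by (rule NN_le[OF w]) (auto simp: psiQ_def)
  also have "\<dots> < \<infinity>" using g b by simp
  finally show "NQ w < \<infinity>" .
qed

lemma GaeI: "AE w in lborel. w \<in> {0..1} \<longrightarrow> Iabs w < \<infinity>"
  using Gae unfolding Iabs_def .

lemma exists_good:
  assumes "a < b"
  shows "\<exists>w. w \<in> {a<..<b} \<and> (w \<in> {0..1} \<longrightarrow> Iabs w < \<infinity>)"
proof (rule ccontr)
  assume "\<not> ?thesis"
  then have sub: "{a<..<b} \<subseteq> {w. \<not> (w \<in> {0..1} \<longrightarrow> Iabs w < \<infinity>)}" by auto
  from GaeI obtain N where N: "{w \<in> space lborel. \<not> (w \<in> {0..1} \<longrightarrow> Iabs w < \<infinity>)} \<subseteq> N" "emeasure lborel N = 0" "N \<in> sets lborel"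
    by (auto elim!: AE_E)
  have "{a<..<b} \<subseteq> N" using sub N(1) by auto
  then have "emeasure lborel {a<..<b} \<le> emeasure lborel N" using N(3) by (intro emeasure_mono) auto
  then show False using N(2) assms by simp
qed

lemma fin_w:
  assumes w: "w \<in> {w1, w2}"
  shows "NP w < \<infinity>" "NQ w < \<infinity>"
proof -
  obtain u where u: "u \<in> {w2<..<1}" "u \<in> {0..1} \<longrightarrow> Iabs u < \<infinity>" using exists_good[of w2 1] geo by auto
  obtain v where v: "v \<in> {0<..<w1}" "v \<in> {0..1} \<longrightarrow> Iabs v < \<infinity>" using exists_good[of 0 w1] geo by auto
  have u01: "u \<in> {0..1}" "u \<in> {0<..<1}" using u geo by auto
  have v01: "v \<in> {0..1}" "v \<in> {0<..<1}" using v geo by auto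
  have w01: "w \<in> {0<..<1}" "w \<in> {0..1}" using w geo by auto
  have fu: "NP u < \<infinity>" using good_fin[OF u01(1)] u u01 by auto
  have fv: "NQ v < \<infinity>" using good_fin[OF v01(1)] v v01 by auto
  have "ennreal (fW f u) * NP w \<le> ennreal (fW f w) * NP u"
    by (rule monoP[OF w01(1) u01(2)]) (use u w geo in auto)
  also have "\<dots> < \<infinity>" using fu by (simp add: ennreal_mult_less_top)
  finally have "ennreal (fW f u) * NP w < \<infinity>" .
  then show "NP w < \<infinity>" using fWpos[OF u01(1)] by (auto simp: ennreal_mult_less_top)
  have "ennreal (fW f v) * NQ w \<le> ennreal (fW f w) * NQ v"
    by (rule monoQ[OF v01(2) w01(1)]) (use v w geo in auto)
  also have "\<dots> < \<infinity>" using fv by (simp add: ennreal_mult_less_top)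
  finally have "ennreal (fW f v) * NQ w < \<infinity>" .
  then show "NQ w < \<infinity>" using fWpos[OF v01(1)] by (auto simp: ennreal_mult_less_top)
qed

end


lemma div_cmp:
  fixes u v k a b :: real
  assumes "0 < u" "0 < v" "k * v * a \<le> u * b"
  shows "k * (a / u) \<le> b / v"
proof -
  have "k * (a / u) = (k * v * a) / (u * v)" using assms by (simp add: field_simps)
  also have "\<dots> \<le> (u * b) / (u * v)" using assms by (intro divide_right_mono) auto
  also have "\<dots> = b / v" using assms by simp
  finally show ?thesis .
qed

lemma real_of_ineq:
  fixes X Y :: ennreal
  assumes "ennreal a * X \<le> ennreal b * Y" "X < \<infinity>" "Y < \<infinity>" "0 \<le> a" "0 \<le> b"
  shows "a * enn2real X \<le> b * enn2real Y"
proof -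
  have X: "X = ennreal (enn2real X)" and Y: "Y = ennreal (enn2real Y)" using assms by auto
  have "ennreal (a * enn2real X) \<le> ennreal (b * enn2real Y)"
    using assms(1) assms(4,5) by (subst (asm) X, subst (asm) Y) (simp add: ennreal_mult)
  then show ?thesis using assms(5) by (simp add: ennreal_le_iff)
qed

context full
begin

definition "P w = enn2real (NP w) / fW f w"
definition "Q w = enn2real (NQ w) / fW f w"
definition "g w = h xt1 + P w - Q w"

lemma PQ_nn: "0 \<le> P w" "0 \<le> Q w" if "w \<in> {0..1}"
  using fWpos[OF that] by (auto simp: P_def Q_def)

lemma opT_g:
  assumes w: "w \<in> {0..1}" and "NP w < \<infinity>" "NQ w < \<infinity>"
  shows "opT f h w = fW f w * g w"
proof -
  have "fW f w * g w = h xt1 * fW f w + enn2real (NP w) - enn2real (NQ w)"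
    using fWpos[OF w] by (simp add: g_def P_def Q_def algebra_simps)
  then show ?thesis using decomp[OF assms] by simp
qed

lemma fW0: "w \<in> {0..1} \<Longrightarrow> 0 \<le> fW f w" using fWpos by (simp add: less_imp_le)

lemma g_up:
  assumes w: "w \<in> {w2<..<1}" and fP: "NP w < \<infinity>" and fQ: "NQ w < \<infinity>"
  shows "g w2 \<le> g w"
proof -
  have w01: "w \<in> {0..1}" "w \<in> {0<..<1}" and w2: "w2 \<in> {0..1}" "w2 \<in> {0<..<1}" "w2 \<in> {w1,w2}" using w geo by auto
  have "fW f w * enn2real (NP w2) \<le> fW f w2 * enn2real (NP w)"
    using real_of_ineq[OF monoP[OF w2(2) w01(2)] fin_w(1)[OF w2(3)] fP fW0 fW0] w w01 w2 by auto
  then have p: "1 * P w2 \<le> P w" unfolding P_def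
    by (intro div_cmp) (use fWpos w01 w2 in auto)
  have "fW f w2 * enn2real (NQ w) \<le> fW f w * enn2real (NQ w2)"
    using real_of_ineq[OF monoQ[OF w2(2) w01(2)] fQ fin_w(2)[OF w2(3)] fW0 fW0] w w01 w2 by auto
  then have q: "1 * Q w \<le> Q w2" unfolding Q_def
    by (intro div_cmp) (use fWpos w01 w2 in auto)
  show ?thesis using p q by (simp add: g_def)
qed

lemma g_down:
  assumes w: "w \<in> {0<..<w1}" and fP: "NP w < \<infinity>" and fQ: "NQ w < \<infinity>"
  shows "g w \<le> g w1"
proof -
  have w01: "w \<in> {0..1}" "w \<in> {0<..<1}" and w1: "w1 \<in> {0..1}" "w1 \<in> {0<..<1}" "w1 \<in> {w1,w2}" using w geo by auto
  have "fW f w1 * enn2real (NP w) \<le> fW f w * enn2real (NP w1)"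
    using real_of_ineq[OF monoP[OF w01(2) w1(2)] fP fin_w(1)[OF w1(3)] fW0 fW0] w w01 w1 by auto
  then have p: "1 * P w \<le> P w1" unfolding P_def
    by (intro div_cmp) (use fWpos w01 w1 in auto)
  have "fW f w * enn2real (NQ w1) \<le> fW f w1 * enn2real (NQ w)"
    using real_of_ineq[OF monoQ[OF w01(2) w1(2)] fin_w(2)[OF w1(3)] fQ fW0 fW0] w w01 w1 by auto
  then have q: "1 * Q w1 \<le> Q w" unfolding Q_def
    by (intro div_cmp) (use fWpos w01 w1 in auto)
  show ?thesis using p q by (simp add: g_def)
qed

lemma CF_P: "C_F * P w1 \<le> P w2"
proof -
  have w: "w1 \<in> {0..1}" "w2 \<in> {0..1}" "w1 \<in> {w1,w2}" "w2 \<in> {w1,w2}" using geo by auto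
  have "(C_F * fW f w2) * enn2real (NP w1) \<le> fW f w1 * enn2real (NP w2)"
    using real_of_ineq[OF CFP fin_w(1)[OF w(3)] fin_w(1)[OF w(4)]] CF fW0[OF w(1)] fW0[OF w(2)] by auto
  then show ?thesis unfolding P_def
    by (intro div_cmp) (use fWpos w in \<open>auto simp: mult.assoc\<close>)
qed

lemma CF_Q: "C_F * Q w2 \<le> Q w1"
proof -
  have w: "w1 \<in> {0..1}" "w2 \<in> {0..1}" "w1 \<in> {w1,w2}" "w2 \<in> {w1,w2}" using geo by auto
  have "(C_F * fW f w1) * enn2real (NQ w2) \<le> fW f w2 * enn2real (NQ w1)"
    using real_of_ineq[OF CFQ fin_w(2)[OF w(4)] fin_w(2)[OF w(3)]] CF fW0[OF w(1)] fW0[OF w(2)] by auto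
  then show ?thesis unfolding Q_def
    by (intro div_cmp) (use fWpos w in \<open>auto simp: mult.assoc\<close>)
qed

end


lemma alg:
  fixes hc dd P1 P2 Q1 Q2 g1 g2 CF D K :: real
  assumes CF: "1 < CF" and D: "0 < D" and nn: "0 \<le> P1" "0 \<le> Q2"
    and c1: "CF * P1 \<le> P2" and c2: "CF * Q2 \<le> Q1"
    and g1: "g1 = hc + P1 - Q1" and g2: "g2 = hc + P2 - Q2" and dd: "0 \<le> dd" "dd * D \<le> P2"
    and K: "K = max (max 0 g2) (max 0 (-g1))"
  shows "\<bar>hc\<bar> + dd \<le> K * (1 + 2 * CF / (CF - 1) * (1 + 1 / D) + 2 / (CF - 1))"
proof -
  have K0: "0 \<le> K" "g2 \<le> K" "- g1 \<le> K" using K by auto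
  have P2: "0 \<le> P2" using c1 nn CF by (smt (verit) mult_nonneg_nonneg)
  have e1: "(CF - 1) * P2 \<le> CF * (P2 - P1)" using c1 by (simp add: algebra_simps)
  have e2: "(CF - 1) * Q2 \<le> Q1 - Q2" using c2 by (simp add: algebra_simps)
  have diff: "g2 - g1 = (P2 - P1) + (Q1 - Q2)" using g1 g2 by simp
  have PP: "0 \<le> P2 - P1"
  proof -
    have "P1 \<le> CF * P1" using nn CF by (simp add: mult_le_cancel_right1)
    then show ?thesis using c1 by simp
  qed
  have QQ: "0 \<le> Q1 - Q2" using e2 nn CF by (smt (verit) mult_nonneg_nonneg)
  have gg: "g1 \<le> g2" using diff PP QQ by simp
  have sum: "(P2 - P1) + (Q1 - Q2) \<le> 2 * K" using diff K0 by simp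
  have bP: "P2 \<le> 2 * K * CF / (CF - 1)"
  proof -
    have "(CF - 1) * P2 \<le> CF * (2 * K)"
      using e1 sum QQ CF by (smt (verit) mult_left_mono)
    then show ?thesis using CF by (simp add: pos_le_divide_eq mult.commute mult.left_commute)
  qed
  have bQ: "Q2 \<le> 2 * K / (CF - 1)"
  proof -
    have "(CF - 1) * Q2 \<le> 2 * K" using e2 sum PP by simp
    then show ?thesis using CF by (simp add: pos_le_divide_eq mult.commute)
  qed
  have bh: "\<bar>hc\<bar> \<le> K + P2 + Q2" using g2 gg K0 P2 nn by auto
  have bd: "dd \<le> P2 / D" using dd D by (simp add: pos_le_divide_eq)
  have "\<bar>hc\<bar> + dd \<le> K + P2 * (1 + 1 / D) + Q2" using bh bd by (simp add: algebra_simps)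
  also have "\<dots> \<le> K + 2 * K * CF / (CF - 1) * (1 + 1 / D) + 2 * K / (CF - 1)"
    using bP bQ D by (intro add_mono mult_right_mono) auto
  also have "\<dots> = K * (1 + 2 * CF / (CF - 1) * (1 + 1 / D) + 2 / (CF - 1))"
    by (simp add: algebra_simps)
  finally show ?thesis .
qed

context full
begin

lemma P2_lb: "(h xt2 - h xt1) * (c_f * (x2 - xt2)) \<le> P w2"
proof -
  define d where "d = h xt2 - h xt1"
  have w2: "w2 \<in> {0..1}" "w2 \<in> {w1, w2}" using geo by auto
  have d0: "0 \<le> d" unfolding d_def using mono_onD[OF hmono, of xt1 xt2] geo by auto
  have fpos: "0 < fW f w2" using fWpos[OF w2(1)] .
  have "ennreal (d * (c_f * fW f w2)) * ennreal (x2 - xt2) = (\<integral>\<^sup>+x. ennreal (d * (c_f * fW f w2)) * indicator {xt2<..<x2} x \<partial>lborel)"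
    using geo by (simp add: nn_integral_cmult_indicator)
  also have "\<dots> \<le> NP w2" unfolding NN_def
  proof (rule nn_integral_mono)
    fix x
    show "ennreal (d * (c_f * fW f w2)) * indicator {xt2<..<x2} x \<le> ennreal (psiP h xt1 x) * (ennreal (f x w2) * indicator {0..1} x)"
    proof (cases "x \<in> {xt2<..<x2}")
      case True
      have x01: "x \<in> {0..1}" using True geo by auto
      have "h xt2 \<le> h x" using mono_onD[OF hmono, of xt2 x] True geo by auto
      then have ps: "d \<le> psiP h xt1 x" unfolding d_def psiP_def by auto
      have "c_f \<le> condDens f x w2" using dens[of x w2] True geo by auto
      then have fx: "c_f * fW f w2 \<le> f x w2" using fpos by (simp add: condDens_def pos_le_divide_eq)
      have "d * (c_f * fW f w2) \<le> psiP h xt1 x * f x w2"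
        using ps fx d0 cf fpos by (intro mult_mono) auto
      then have "ennreal (d * (c_f * fW f w2)) \<le> ennreal (psiP h xt1 x * f x w2)" by (rule ennreal_leI)
      also have "\<dots> = ennreal (psiP h xt1 x) * ennreal (f x w2)" by (rule ennreal_mult'[OF psi_nn(1)])
      finally show ?thesis using True x01 by simp
    qed simp
  qed
  finally have le1: "ennreal (d * (c_f * fW f w2)) * ennreal (x2 - xt2) \<le> NP w2" .
  have "ennreal (d * (c_f * fW f w2) * (x2 - xt2)) = ennreal (d * (c_f * fW f w2)) * ennreal (x2 - xt2)"
    by (rule ennreal_mult) (use d0 cf fpos geo in auto)
  also have "\<dots> \<le> NP w2" by (rule le1)
  also have "NP w2 = ennreal (enn2real (NP w2))" using fin_w(1)[OF w2(2)] by simp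
  finally have "ennreal (d * (c_f * fW f w2) * (x2 - xt2)) \<le> ennreal (enn2real (NP w2))" .
  then have "d * (c_f * fW f w2) * (x2 - xt2) \<le> enn2real (NP w2)" by (simp add: ennreal_le_iff)
  then have "(d * (c_f * (x2 - xt2))) * fW f w2 \<le> enn2real (NP w2)" by (simp add: algebra_simps)
  then show ?thesis unfolding P_def d_def[symmetric] using fpos by (simp add: pos_le_divide_eq)
qed

lemma Th_int': "integrable lborel (\<lambda>w. indicator {0..1} w * (opT f h w)\<^sup>2)"
  using Th2_int by (simp add: set_integrable_def)

lemma int_lb_up: "(1 - w2) * (c_W * max 0 (g w2))\<^sup>2 \<le> (LINT w:{0..1}|lborel. (opT f h w)\<^sup>2)"
proof -
  define C0 where "C0 = (c_W * max 0 (g w2))\<^sup>2"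
  have "(1 - w2) * C0 = (LINT w|lborel. indicator {w2<..<1} w * C0)"
    using geo by simp
  also have "\<dots> \<le> (LINT w|lborel. indicator {0..1} w * (opT f h w)\<^sup>2)"
  proof (rule integral_mono_AE)
    have "integrable lborel (indicat_real {w2<..<1})" by (rule integrable_real_indicator) (use geo in auto)
    then show "integrable lborel (\<lambda>w. indicator {w2<..<1} w * C0)" by simp
    show "integrable lborel (\<lambda>w. indicator {0..1} w * (opT f h w)\<^sup>2)" by (rule Th_int')
    show "AE w in lborel. indicator {w2<..<1} w * C0 \<le> indicator {0..1} w * (opT f h w)\<^sup>2"
      using GaeI
    proof eventually_elim
      case (elim w)
      show ?case
      proof (cases "w \<in> {w2<..<1}")
        case True
        have w01: "w \<in> {0..1}" using True geo by auto
        have fin: "NP w < \<infinity>" "NQ w < \<infinity>" using good_fin[OF w01] elim w01 by auto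
        have Th: "opT f h w = fW f w * g w" by (rule opT_g[OF w01 fin])
        have gu: "g w2 \<le> g w" by (rule g_up[OF True fin])
        have "C0 \<le> (opT f h w)\<^sup>2"
        proof (cases "0 < g w2")
          case True
          have "c_W * g w2 \<le> fW f w * g w"
            using fWlb[OF w01] cW gu True by (intro mult_mono) auto
          then have "(c_W * g w2)\<^sup>2 \<le> (opT f h w)\<^sup>2" unfolding Th
            using cW True by (intro power_mono) auto
          then show ?thesis unfolding C0_def using True by simp
        next
          case False then show ?thesis unfolding C0_def by simp
        qed
        then show ?thesis using True w01 by simp
      next
        case False then show ?thesis by simp
      qed
    qed
  qed
  finally show ?thesis unfolding C0_def set_lebesgue_integral_def by simp
qed

lemma int_lb_down: "w1 * (c_W * max 0 (- g w1))\<^sup>2 \<le> (LINT w:{0..1}|lborel. (opT f h w)\<^sup>2)"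
proof -
  define C0 where "C0 = (c_W * max 0 (- g w1))\<^sup>2"
  have "w1 * C0 = (LINT w|lborel. indicator {0<..<w1} w * C0)"
    using geo by simp
  also have "\<dots> \<le> (LINT w|lborel. indicator {0..1} w * (opT f h w)\<^sup>2)"
  proof (rule integral_mono_AE)
    have "integrable lborel (indicat_real {0<..<w1})" by (rule integrable_real_indicator) (use geo in auto)
    then show "integrable lborel (\<lambda>w. indicator {0<..<w1} w * C0)" by simp
    show "integrable lborel (\<lambda>w. indicator {0..1} w * (opT f h w)\<^sup>2)" by (rule Th_int')
    show "AE w in lborel. indicator {0<..<w1} w * C0 \<le> indicator {0..1} w * (opT f h w)\<^sup>2"
      using GaeI
    proof eventually_elim
      case (elim w)
      show ?case
      proof (cases "w \<in> {0<..<w1}")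
        case True
        have w01: "w \<in> {0..1}" using True geo by auto
        have fin: "NP w < \<infinity>" "NQ w < \<infinity>" using good_fin[OF w01] elim w01 by auto
        have Th: "opT f h w = fW f w * g w" by (rule opT_g[OF w01 fin])
        have gd: "g w \<le> g w1" by (rule g_down[OF True fin])
        have "C0 \<le> (opT f h w)\<^sup>2"
        proof (cases "0 < - g w1")
          case True
          have "c_W * (- g w1) \<le> fW f w * (- g w)"
            using fWlb[OF w01] cW gd True by (intro mult_mono) auto
          moreover have nn: "0 \<le> c_W * (- g w1)" using cW True by (intro mult_nonneg_nonneg) auto
          ultimately have "(c_W * (- g w1))\<^sup>2 \<le> (fW f w * (- g w))\<^sup>2"
            by (rule power_mono)
          also have "\<dots> = (opT f h w)\<^sup>2" unfolding Th by (simp add: power2_eq_square)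
          finally show ?thesis unfolding C0_def using True by simp
        next
          case False then show ?thesis unfolding C0_def by simp
        qed
        then show ?thesis using True w01 by simp
      next
        case False then show ?thesis by simp
      qed
    qed
  qed
  finally show ?thesis unfolding C0_def set_lebesgue_integral_def by simp
qed

end


definition Lc :: "real \<Rightarrow> real \<Rightarrow> real \<Rightarrow> real \<Rightarrow> real" where
  "Lc C_F c_f x2 xt2 = 1 + 2 * C_F / (C_F - 1) * (1 + 1 / (c_f * (x2 - xt2))) + 2 / (C_F - 1)"

definition Cbar :: "real \<Rightarrow> real \<Rightarrow> real \<Rightarrow> real \<Rightarrow> real \<Rightarrow> real \<Rightarrow> real \<Rightarrow> real \<Rightarrow> real" where
  "Cbar C_F c_f c_W x2 xt1 xt2 w1 w2 = sqrt (xt2 - xt1) * Lc C_F c_f x2 xt2 / (c_W * sqrt (min w1 (1 - w2)))"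

context full
begin

lemma main_inc: "norm2t xt1 xt2 h \<le> Cbar C_F c_f c_W x2 xt1 xt2 w1 w2 * norm2 (opT f h)"
proof -
  define L where "L = Lc C_F c_f x2 xt2"
  define K where "K = max (max 0 (g w2)) (max 0 (- g w1))"
  define mm where "mm = min w1 (1 - w2)"
  have K0: "0 \<le> K" unfolding K_def by auto
  have D: "0 < c_f * (x2 - xt2)" using cf geo by auto
  have L0: "0 \<le> L" unfolding L_def Lc_def using CF D by (intro add_nonneg_nonneg mult_nonneg_nonneg) auto
  have w1: "w1 \<in> {0..1}" and w2: "w2 \<in> {0..1}" using geo by auto
  have key: "\<bar>h xt1\<bar> + (h xt2 - h xt1) \<le> K * L"
    unfolding L_def Lc_def
  proof (rule alg[OF CF D PQ_nn(1)[OF w1] PQ_nn(2)[OF w2] CF_P CF_Q])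
    show "g w1 = h xt1 + P w1 - Q w1" "g w2 = h xt1 + P w2 - Q w2" by (simp_all add: g_def)
    show "0 \<le> h xt2 - h xt1" using mono_onD[OF hmono, of xt1 xt2] geo by auto
    show "(h xt2 - h xt1) * (c_f * (x2 - xt2)) \<le> P w2" by (rule P2_lb)
    show "K = max (max 0 (g w2)) (max 0 (- g w1))" by (rule K_def)
  qed
  have hb: "(h x)\<^sup>2 \<le> (K * L)\<^sup>2" if x: "x \<in> {xt1..xt2}" for x
  proof -
    have "h xt1 \<le> h x" "h x \<le> h xt2"
      using mono_onD[OF hmono, of xt1 x] mono_onD[OF hmono, of x xt2] x geo by auto
    then have "\<bar>h x\<bar> \<le> K * L" using key by linarith
    then show ?thesis using abs_ge_zero power_mono by (metis power2_abs)
  qed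
  have up: "(LINT x:{xt1..xt2}|lborel. (h x)\<^sup>2) \<le> (K * L)\<^sup>2 * (xt2 - xt1)"
  proof -
    have i1: "integrable lborel (\<lambda>x. indicator {xt1..xt2} x * (h x)\<^sup>2)"
      using set_integrable_subset[OF h2, of "{xt1..xt2}"] geo by (auto simp: set_integrable_def)
    have i2: "integrable lborel (\<lambda>x. indicator {xt1..xt2} x * (K * L)\<^sup>2)"
    proof -
      have "integrable lborel (indicat_real {xt1..xt2})" by (rule integrable_real_indicator) (use geo in auto)
      then show ?thesis by simp
    qed
    have "(LINT x:{xt1..xt2}|lborel. (h x)\<^sup>2) \<le> (LINT x|lborel. indicator {xt1..xt2} x * (K * L)\<^sup>2)"
      unfolding set_lebesgue_integral_def using hb
      by (simp only: real_scaleR_def) (rule integral_mono[OF i1 i2], auto simp: indicator_def)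
    also have "\<dots> = (K * L)\<^sup>2 * (xt2 - xt1)" using geo by simp
    finally show ?thesis .
  qed
  have n1: "norm2t xt1 xt2 h \<le> K * L * sqrt (xt2 - xt1)"
  proof -
    have "norm2t xt1 xt2 h \<le> sqrt ((K * L)\<^sup>2 * (xt2 - xt1))"
      unfolding norm2t_def using up by (rule real_sqrt_le_mono)
    also have "\<dots> = K * L * sqrt (xt2 - xt1)" using K0 L0 by (simp add: real_sqrt_mult)
    finally show ?thesis .
  qed
  have mm0: "0 < mm" unfolding mm_def using geo by auto
  have lo: "mm * (c_W * K)\<^sup>2 \<le> (LINT w:{0..1}|lborel. (opT f h w)\<^sup>2)"
  proof (cases "max 0 (- g w1) \<le> max 0 (g w2)")
    case True
    then have "K = max 0 (g w2)" unfolding K_def by simp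
    moreover have "mm * (c_W * K)\<^sup>2 \<le> (1 - w2) * (c_W * K)\<^sup>2"
      by (rule mult_right_mono) (auto simp: mm_def)
    ultimately have "mm * (c_W * K)\<^sup>2 \<le> (1 - w2) * (c_W * max 0 (g w2))\<^sup>2" by simp
    then show ?thesis using int_lb_up by linarith
  next
    case False
    then have "K = max 0 (- g w1)" unfolding K_def by simp
    moreover have "mm * (c_W * K)\<^sup>2 \<le> w1 * (c_W * K)\<^sup>2"
      by (rule mult_right_mono) (auto simp: mm_def)
    ultimately have "mm * (c_W * K)\<^sup>2 \<le> w1 * (c_W * max 0 (- g w1))\<^sup>2" by simp
    then show ?thesis using int_lb_down by linarith
  qed
  have n2: "c_W * K * sqrt mm \<le> norm2 (opT f h)"
  proof -
    have "sqrt (mm * (c_W * K)\<^sup>2) \<le> norm2 (opT f h)"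
      unfolding norm2_def using lo by (rule real_sqrt_le_mono)
    moreover have "sqrt (mm * (c_W * K)\<^sup>2) = c_W * K * sqrt mm"
      using cW K0 mm0 by (simp add: real_sqrt_mult)
    ultimately show ?thesis by simp
  qed
  have cpos: "0 < c_W * sqrt mm" using cW mm0 by simp
  have "K * L * sqrt (xt2 - xt1) = Cbar C_F c_f c_W x2 xt1 xt2 w1 w2 * (c_W * K * sqrt mm)"
    unfolding Cbar_def L_def[symmetric] mm_def[symmetric] using cpos mm0 cW by (simp add: field_simps)
  also have "\<dots> \<le> Cbar C_F c_f c_W x2 xt1 xt2 w1 w2 * norm2 (opT f h)"
  proof (rule mult_left_mono[OF n2])
    show "0 \<le> Cbar C_F c_f c_W x2 xt1 xt2 w1 w2"
      unfolding Cbar_def L_def[symmetric] mm_def[symmetric] using L0 cpos geo by simp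
  qed
  finally show ?thesis using n1 by linarith
qed

end


theorem theorem1:
  fixes c_f c_W C_F C_T w1 w2 x1 x2 xt1 xt2 :: real
  assumes "0 \<le> x1" "x1 < xt1" "xt1 < xt2" "xt2 < x2" "x2 \<le> 1"
    and "0 < w1" "w1 < w2" "w2 < 1"
  shows "\<exists>Cbar::real. \<forall>(f :: real \<Rightarrow> real \<Rightarrow> real) (C_W::real).
           monotone_IV f C_F x1 x2 w1 w2 \<and> density_assm f C_T c_f c_W C_W x1 x2 w1 w2 \<longrightarrow>
           (\<forall>h\<in>monoL2. norm2t xt1 xt2 h \<le> Cbar * norm2 (opT f h))"
proof (intro exI allI impI ballI)
  fix f :: "real \<Rightarrow> real \<Rightarrow> real" and C_W :: real and h :: "real \<Rightarrow> real"
  assume H: "monotone_IV f C_F x1 x2 w1 w2 \<and> density_assm f C_T c_f c_W C_W x1 x2 w1 w2"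
  assume hM: "h \<in> monoL2"
  have MI: "monotone_IV f C_F x1 x2 w1 w2" and DA: "density_assm f C_T c_f c_W C_W x1 x2 w1 w2" using H by auto
  have d: "dens f"
  proof
    show "(\<lambda>(x, w). f x w) \<in> borel_measurable (lborel \<Otimes>\<^sub>M lborel)" using DA by (simp add: density_assm_def)
    show "\<And>x w. x \<in> {0..1} \<Longrightarrow> w \<in> {0..1} \<Longrightarrow> 0 \<le> f x w" using DA by (simp add: density_assm_def)
    show "\<And>w. w \<in> {0..1} \<Longrightarrow> 0 < fW f w" using DA unfolding density_assm_def by (meson less_le_trans)
  qed
  have f2: "(\<integral>\<^sup>+ z \<in> {0..1} \<times> {0..1}. ennreal ((case z of (x, w) \<Rightarrow> f x w)\<^sup>2) \<partial>(lborel \<Otimes>\<^sub>M lborel)) < \<infinity>"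
  proof -
    have le: "(\<integral>\<^sup>+ z \<in> {0..1} \<times> {0..1}. ennreal ((case z of (x, w) \<Rightarrow> f x w)\<^sup>2) \<partial>(lborel \<Otimes>\<^sub>M lborel)) \<le> ennreal C_T"
      using DA unfolding density_assm_def by blast
    show ?thesis using le_less_trans[OF le ennreal_less_top] by simp
  qed
  have full: "full f h' C_F c_f c_W x1 x2 xt1 xt2 w1 w2"
    if hm: "h' \<in> borel_measurable lborel" and h2: "set_integrable lborel {0..1} (\<lambda>x. (h' x)\<^sup>2)"
      and mo: "mono_on {0<..<1} h'" for h'
  proof -
    interpret dens f by (rule d)
    interpret msetting f h' by unfold_locales (use hm h2 f2 in auto)
    show ?thesis
    proof unfold_locales
      show "0 \<le> x1" "x1 < xt1" "xt1 < xt2" "xt2 < x2" "x2 \<le> 1" "0 < w1" "w1 < w2" "w2 < 1" by fact+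
      show "\<And>x w' w''. x \<in> {0<..<1} \<Longrightarrow> w' \<in> {0<..<1} \<Longrightarrow> w'' \<in> {0<..<1} \<Longrightarrow> w' \<le> w''
        \<Longrightarrow> condCDF f x w' \<ge> condCDF f x w''" using MI unfolding monotone_IV_def by blast
      show "1 < C_F" using MI unfolding monotone_IV_def by blast
      show "\<And>x. x \<in> {0<..<x2} \<Longrightarrow> condCDF f x w1 \<ge> C_F * condCDF f x w2" using MI unfolding monotone_IV_def by blast
      show "\<And>x. x \<in> {x1<..<1} \<Longrightarrow> C_F * (1 - condCDF f x w1) \<le> 1 - condCDF f x w2" using MI unfolding monotone_IV_def by blast
      show "0 < c_f" using DA unfolding density_assm_def by blast
      show "\<And>x w. x \<in> {x1..x2} \<Longrightarrow> w \<in> {w1, w2} \<Longrightarrow> condDens f x w \<ge> c_f" using DA unfolding density_assm_def by blast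
      show "0 < c_W" using DA unfolding density_assm_def by blast
      show "\<And>w. w \<in> {0..1} \<Longrightarrow> c_W \<le> fW f w" using DA unfolding density_assm_def by blast
      show "mono_on {0<..<1} h'" by (rule mo)
    qed
  qed
  have hm: "h \<in> borel_measurable lborel" and h2: "set_integrable lborel {0..1} (\<lambda>x. (h x)\<^sup>2)"
    and mo: "mono_on {0<..<1} h \<or> antimono_on {0<..<1} h"
    using hM unfolding monoL2_def L2_01_def by auto
  from mo show "norm2t xt1 xt2 h \<le> Cbar C_F c_f c_W x2 xt1 xt2 w1 w2 * norm2 (opT f h)"
  proof
    assume "mono_on {0<..<1} h"
    then show ?thesis using full.main_inc[OF full[OF hm h2]] by blast
  next
    assume am: "antimono_on {0<..<1} h"
    have hm': "(\<lambda>x. - h x) \<in> borel_measurable lborel" using hm by measurable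
    have h2': "set_integrable lborel {0..1} (\<lambda>x. (- h x)\<^sup>2)" using h2 by simp
    have mo': "mono_on {0<..<1} (\<lambda>x. - h x)"
      using am unfolding monotone_on_def by auto
    have "norm2t xt1 xt2 (\<lambda>x. - h x) \<le> Cbar C_F c_f c_W x2 xt1 xt2 w1 w2 * norm2 (opT f (\<lambda>x. - h x))"
      by (rule full.main_inc[OF full[OF hm' h2' mo']])
    moreover have "norm2t xt1 xt2 (\<lambda>x. - h x) = norm2t xt1 xt2 h" by (simp add: norm2t_def)
    moreover have "opT f (\<lambda>x. - h x) = (\<lambda>w. - opT f h w)"
      by (simp add: opT_def set_lebesgue_integral_def fun_eq_iff)
    moreover have "norm2 (\<lambda>w. - opT f h w) = norm2 (opT f h)" by (simp add: norm2_def)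
    ultimately show ?thesis by simp
  qed
qed



end
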